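(* Fix integers $k \ge 3$ and $i \in \{2,\dots,k-1\}$, and let $T = \{1,\dots,k\}\setminus\{i\}$. Let $d \ge 1$ and $x \in \mathbb{Z}_k^d$. Then $\mathbb{Z}_k^d \setminus \{x\}$ is a disjoint union of copies of $T$ in $\mathbb{Z}_k^d$.
   Context: $\mathbb{Z}_k$ denotes the integers modulo $k$. A copy of $T$ in $\mathbb{Z}_k^d$ is a set of the form $\{x + j e_s : j \in \mathbb{Z}_k,\ j \ne j_0\}$ for some $x \in \mathbb{Z}_k^d$, $s \in \{1,\dots,d\}$ ($e_s$ the $s$-th unit vector) and $j_0 \in \mathbb{Z}_k$, i.e. a coordinate line with one point removed. *)

theory Defs
  imports Main "HOL-Library.Disjoint_Sets"
begin

text \<open>Points of Z_k^d are represented as lists of length d with entries in {0..<k}.\<close>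
definition grid :: "nat \<Rightarrow> nat \<Rightarrow> nat list set" where
  "grid k d = {xs. length xs = d \<and> (\<forall>a\<in>set xs. a < k)}"

text \<open>x + j e_s in Z_k^d (coordinates indexed 0..d-1).\<close>
definition shift :: "nat \<Rightarrow> nat list \<Rightarrow> nat \<Rightarrow> nat \<Rightarrow> nat list" where
  "shift k x s j = x[s := (x ! s + j) mod k]"

text \<open>A copy of T: a coordinate line with one point removed.\<close>
definition copyT :: "nat \<Rightarrow> nat \<Rightarrow> nat list set \<Rightarrow> bool" where
  "copyT k d C \<longleftrightarrow> (\<exists>x\<in>grid k d. \<exists>s<d. \<exists>j0<k.
      C = {shift k x s j | j. j < k \<and> j \<noteq> j0})"

end

theory Submission
  imports Defs
begin

definition LL :: "nat \<Rightarrow> nat \<Rightarrow> nat list \<Rightarrow> nat \<Rightarrow> nat list \<Rightarrow> nat list set" where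
  "LL k d x s w = {y\<in>grid k d. (\<forall>t<s. y!t = x!t) \<and> y!s \<noteq> x!s \<and> (\<forall>t. s<t \<and> t<d \<longrightarrow> y!t = w!t)}"

lemma grid_nth: "y \<in> grid k d \<Longrightarrow> t < d \<Longrightarrow> y!t < k"
  unfolding grid_def by auto

lemma line_eq:
  assumes w: "w \<in> grid k d" and s: "s < d" and wx: "\<forall>t\<le>s. w!t = x!t"
  shows "{shift k w s j | j. j < k \<and> j \<noteq> 0} = LL k d x s w"
proof
  have lw: "length w = d" using w by (simp add: grid_def)
  have wsk: "w!s < k" using grid_nth[OF w s] .
  show "{shift k w s j | j. j < k \<and> j \<noteq> 0} \<subseteq> LL k d x s w"
  proof
    fix y assume "y \<in> {shift k w s j | j. j < k \<and> j \<noteq> 0}"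
    then obtain j where j: "j<k" "j\<noteq>0" and y: "y = shift k w s j" by auto
    have kp: "k > 0" using j by auto
    have g: "y \<in> grid k d"
      unfolding y shift_def grid_def using w kp
      by (auto simp: grid_def dest!: set_update_subset_insert[THEN subsetD])
    have ys: "y!s = (w!s + j) mod k" using s lw by (simp add: y shift_def)
    have "(w!s + j) mod k \<noteq> w!s"
    proof
      assume h: "(w!s + j) mod k = w!s"
      show False
      proof (cases "w!s + j < k")
        case True then show ?thesis using h j by simp
      next
        case False
        then have "(w!s + j) mod k = w!s + j - k" using j wsk
          by (simp add: le_mod_geq mod_less)
        then show ?thesis using h j wsk False by simp
      qed
    qed
    then have "y!s \<noteq> x!s" using ys wx by auto
    moreover have "\<forall>t<s. y!t = x!t" using wx by (simp add: y shift_def)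
    moreover have "\<forall>t. s<t \<and> t<d \<longrightarrow> y!t = w!t" by (simp add: y shift_def)
    ultimately show "y \<in> LL k d x s w" using g by (simp add: LL_def)
  qed
  show "LL k d x s w \<subseteq> {shift k w s j | j. j < k \<and> j \<noteq> 0}"
  proof
    fix y assume "y \<in> LL k d x s w"
    then have g: "y \<in> grid k d" and a: "\<forall>t<s. y!t = x!t" and b: "y!s \<noteq> x!s"
      and c: "\<forall>t. s<t \<and> t<d \<longrightarrow> y!t = w!t" by (auto simp: LL_def)
    have ly: "length y = d" using g by (simp add: grid_def)
    have ysk: "y!s < k" using grid_nth[OF g s] .
    have b': "y!s \<noteq> w!s" using b wx by auto
    define j where "j = (if w!s \<le> y!s then y!s - w!s else y!s + k - w!s)"
    have jk: "j < k" "j \<noteq> 0" using ysk wsk b' by (auto simp: j_def)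
    have "(w!s + j) mod k = y!s"
    proof (cases "w!s \<le> y!s")
      case True then show ?thesis using ysk by (simp add: j_def)
    next
      case False
      then have "w!s + j = y!s + k" using wsk by (simp add: j_def)
      then show ?thesis using ysk by simp
    qed
    then have "shift k w s j = y"
      unfolding shift_def
    proof (intro nth_equalityI)
      show "length (w[s := (w ! s + j) mod k]) = length y" by (simp add: lw ly)
      fix i assume "i < length (w[s := (w ! s + j) mod k])"
      then have i: "i < d" by (simp add: lw)
      show "w[s := (w ! s + j) mod k] ! i = y ! i"
      proof (cases "i < s")
        case True then show ?thesis using a wx by (simp add: nth_list_update)
      next
        case False
        then have "i = s \<or> s < i" by arith
        then show ?thesis using c i lw s \<open>(w!s + j) mod k = y!s\<close> by (auto simp: nth_list_update)
      qed
    qed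
    then show "y \<in> {shift k w s j | j. j < k \<and> j \<noteq> 0}" using jk by blast
  qed
qed

theorem proposition4:
  fixes k i d :: nat and x :: "nat list"
  assumes "k \<ge> 3" and "2 \<le> i" and "i \<le> k - 1"
    and "d \<ge> 1" and "x \<in> grid k d"
  shows "\<exists>\<C>. (\<forall>C\<in>\<C>. copyT k d C) \<and> disjoint \<C> \<and> \<Union>\<C> = grid k d - {x}"
proof -
  have lx: "length x = d" using assms(5) by (simp add: grid_def)
  define P where "P = {(s,w). s<d \<and> w\<in>grid k d \<and> (\<forall>t\<le>s. w!t = x!t)}"
  define CC where "CC = (\<lambda>(s,w). LL k d x s w) ` P"
  have 1: "\<forall>C\<in>CC. copyT k d C"
  proof
    fix C assume "C \<in> CC"
    then obtain s w where p: "s<d" "w\<in>grid k d" "\<forall>t\<le>s. w!t = x!t" and C: "C = LL k d x s w"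
      by (auto simp: CC_def P_def)
    have "0 < k" using assms(1) by simp
    then show "copyT k d C" unfolding copyT_def C
      using line_eq[OF p(2) p(1) p(3)] p by blast
  qed
  have 2: "disjoint CC"
    unfolding disjoint_def
  proof (intro ballI impI)
    fix A B assume A: "A \<in> CC" and B: "B \<in> CC" and ne: "A \<noteq> B"
    obtain s w where A': "A = LL k d x s w" using A by (auto simp: CC_def)
    obtain s' w' where B': "B = LL k d x s' w'" using B by (auto simp: CC_def)
    show "A \<inter> B = {}"
    proof (rule ccontr)
      assume "A \<inter> B \<noteq> {}"
      then obtain y where yA: "y \<in> A" and yB: "y \<in> B" by blast
      have ss: "s = s'"
      proof (rule ccontr)
        assume "s \<noteq> s'"
        then have "s < s' \<or> s' < s" by arith
        then show False using yA yB by (auto simp: A' B' LL_def)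
      qed
      have "A = B"
      proof -
        have "\<forall>t. s<t \<and> t<d \<longrightarrow> w!t = w'!t" using yA yB ss by (auto simp: A' B' LL_def)
        then show ?thesis unfolding A' B' LL_def ss by auto
      qed
      then show False using ne by simp
    qed
  qed
  have 3: "\<Union>CC = grid k d - {x}"
  proof
    show "\<Union>CC \<subseteq> grid k d - {x}" by (auto simp: CC_def LL_def)
    show "grid k d - {x} \<subseteq> \<Union>CC"
    proof
      fix y assume y: "y \<in> grid k d - {x}"
      have ly: "length y = d" using y by (simp add: grid_def)
      have "\<exists>t<d. y!t \<noteq> x!t"
      proof (rule ccontr)
        assume "\<not> ?thesis"
        then have "y = x" by (intro nth_equalityI) (auto simp: lx ly)
        then show False using y by simp
      qed
      then obtain t where t: "t<d" "y!t \<noteq> x!t" by blast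
      define s where "s = (LEAST t. y!t \<noteq> x!t)"
      have s1: "y!s \<noteq> x!s" unfolding s_def by (rule LeastI[of _ t], rule t(2))
      have s2: "s \<le> t" unfolding s_def by (rule Least_le, rule t(2))
      have s3: "\<forall>u<s. y!u = x!u" unfolding s_def using not_less_Least by blast
      have sd: "s < d" using s2 t by simp
      define w where "w = y[s := x!s]"
      have wg: "w \<in> grid k d" using y grid_nth[OF assms(5) sd]
        by (auto simp: w_def grid_def dest!: set_update_subset_insert[THEN subsetD])
      have wx: "\<forall>u\<le>s. w!u = x!u" using s3 ly sd by (auto simp: w_def nth_list_update)
      have "y \<in> LL k d x s w" using y s1 s3 ly by (auto simp: LL_def w_def)
      moreover have "(s,w) \<in> P" using sd wg wx by (simp add: P_def)
      ultimately show "y \<in> \<Union>CC" by (auto simp: CC_def)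
    qed
  qed
  show ?thesis using 1 2 3 by blast
qed

end
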